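(* Let $G=(V,E)$ be a finite graph with adjacency matrix $A$, and suppose there exist $\boldsymbol\beta,\boldsymbol\gamma,\boldsymbol\lambda\in(0,\infty)^V$ such that every induced subgraph $H$ of $G$ has local $(\boldsymbol\beta|_{V(H)},\boldsymbol\gamma|_{V(H)},\boldsymbol\lambda|_{V(H)})$-occupancy. Let $B=\mathrm{diag}(\boldsymbol\beta)$ and $\Gamma=\mathrm{diag}(\boldsymbol\gamma)$. Then every vector $\mathbf q\in\mathbb R^V$ with $\mathbf q\ge\mathbf 0$ and $(B+\Gamma A)\mathbf q\le\mathbf 1$ lies in the independence polytope $\mathrm{ind}(G)$.
   Context: The independence polytope $\mathrm{ind}(G)\subset\mathbb R^V$ is the convex hull of the indicator vectors $\mathbf x^I\in\{0,1\}^V$ of independent sets $I$ of $G$ (including $\emptyset$). For a graph $H$ and $\boldsymbol\beta,\boldsymbol\gamma,\boldsymbol\lambda\in[0,\infty)^{V(H)}$, $H$ has local $(\boldsymbol\beta,\boldsymbol\gamma,\boldsymbol\lambda)$-occupancy if for every $u\in V(H)$, $\beta_u\Pr_{H,\boldsymbol\lambda}(u\in X)+\gamma_u\sum_{v\in N_H(u)}\Pr_{H,\boldsymbol\lambda}(v\in X)\ge1$, where $X$ is drawn from the hard-core model on $H$: $\Pr_{H,\boldsymbol\lambda}(I)\propto\prod_{v\in I}\lambda_v$ over independent sets $I$ of $H$. Vector inequalities are entrywise. *)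

theory Defs
  imports "HOL-Analysis.Analysis"
begin

text \<open>A finite simple graph G has vertex set the finite type 'n (so R^V = real^'n)
  and a symmetric irreflexive adjacency relation E.\<close>

definition independent_set :: "('n \<Rightarrow> 'n \<Rightarrow> bool) \<Rightarrow> 'n set \<Rightarrow> bool" where
  "independent_set E I \<longleftrightarrow> (\<forall>u\<in>I. \<forall>v\<in>I. \<not> E u v)"

definition indicator_vec :: "'n set \<Rightarrow> real^'n::finite" where
  "indicator_vec I = (\<chi> v. if v \<in> I then 1 else 0)"

definition ind_polytope :: "('n::finite \<Rightarrow> 'n \<Rightarrow> bool) \<Rightarrow> (real^'n) set" where
  "ind_polytope E = convex hull {indicator_vec I | I. independent_set E I}"

definition adj_matrix :: "('n::finite \<Rightarrow> 'n \<Rightarrow> bool) \<Rightarrow> real^'n^'n" where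
  "adj_matrix E = (\<chi> i j. if E i j then 1 else 0)"

definition diag_mat :: "real^'n::finite \<Rightarrow> real^'n^'n" where
  "diag_mat d = (\<chi> i j. if i = j then d $ i else 0)"

text \<open>Hard-core model on the induced subgraph H = G[S] with activities lam:
  weight of an independent set I \<subseteq> S is prod of lam over I.\<close>
definition hc_weight :: "('n \<Rightarrow> real) \<Rightarrow> 'n set \<Rightarrow> real" where
  "hc_weight lam I = (\<Prod>v\<in>I. lam v)"

definition hc_partition :: "('n \<Rightarrow> 'n \<Rightarrow> bool) \<Rightarrow> 'n set \<Rightarrow> ('n \<Rightarrow> real) \<Rightarrow> real" where
  "hc_partition E S lam = (\<Sum>I\<in>{I. I \<subseteq> S \<and> independent_set E I}. hc_weight lam I)"

definition hc_occ_prob :: "('n \<Rightarrow> 'n \<Rightarrow> bool) \<Rightarrow> 'n set \<Rightarrow> ('n \<Rightarrow> real) \<Rightarrow> 'n \<Rightarrow> real" where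
  "hc_occ_prob E S lam u =
     (\<Sum>I\<in>{I. I \<subseteq> S \<and> independent_set E I \<and> u \<in> I}. hc_weight lam I) / hc_partition E S lam"

definition local_occupancy ::
  "('n \<Rightarrow> 'n \<Rightarrow> bool) \<Rightarrow> 'n set \<Rightarrow> ('n \<Rightarrow> real) \<Rightarrow> ('n \<Rightarrow> real) \<Rightarrow> ('n \<Rightarrow> real) \<Rightarrow> bool" where
  "local_occupancy E S beta gamma lam \<longleftrightarrow>
     (\<forall>u\<in>S. beta u * hc_occ_prob E S lam u
              + gamma u * (\<Sum>v\<in>{v\<in>S. E u v}. hc_occ_prob E S lam v) \<ge> 1)"

end

theory Submission
  imports Defs
begin

definition phi :: "real^'n::finite \<Rightarrow> real^'n \<Rightarrow> ('n \<Rightarrow> 'n \<Rightarrow> bool) \<Rightarrow> 'n \<Rightarrow> real^'n \<Rightarrow> real" where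
  "phi beta gamma E u c = beta $ u * c $ u + gamma $ u * (\<Sum>v\<in>{v. E u v}. c $ v)"

lemma phi_matrix:
  "((diag_mat beta + diag_mat gamma ** adj_matrix E) *v q) $ u = phi beta gamma E u q"
proof -
  have 1: "(\<Sum>j\<in>UNIV. (if u = j then beta $ u else 0) * q $ j) = beta $ u * q $ u"
  proof -
    have "(\<Sum>j\<in>UNIV. (if u = j then beta $ u else 0) * q $ j) = (\<Sum>j\<in>UNIV. if u = j then beta $ u * q $ j else 0)"
      by (rule sum.cong) auto
    then show ?thesis by simp
  qed
  have 2: "(diag_mat gamma ** adj_matrix E) $ u $ j = gamma $ u * (if E u j then 1 else 0)" for j
  proof -
    have "(diag_mat gamma ** adj_matrix E) $ u $ j = (\<Sum>k\<in>UNIV. (if u = k then gamma $ u else 0) * (if E k j then 1 else 0))"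
      by (simp add: matrix_matrix_mult_def diag_mat_def adj_matrix_def)
    also have "\<dots> = (\<Sum>k\<in>UNIV. if u = k then gamma $ u * (if E u j then 1 else 0) else 0)"
      by (rule sum.cong) auto
    finally show ?thesis by simp
  qed
  have 3: "(\<Sum>j\<in>UNIV. gamma $ u * (if E u j then 1 else 0) * q $ j) = gamma $ u * (\<Sum>v\<in>{v. E u v}. q $ v)"
  proof -
    have "(\<Sum>j\<in>UNIV. gamma $ u * (if E u j then 1 else 0) * q $ j) = (\<Sum>j\<in>UNIV. if E u j then gamma $ u * q $ j else 0)"
      by (rule sum.cong) auto
    also have "\<dots> = (\<Sum>j\<in>{v. E u v}. gamma $ u * q $ j)"
      by (simp add: sum.If_cases)
    finally show ?thesis by (simp add: sum_distrib_left)
  qed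
  have 0: "(diag_mat beta) $ u $ j = (if u = j then beta$u else 0)" for j
      by (simp add: diag_mat_def)
    show ?thesis
    by (simp only: matrix_vector_mult_def phi_def vec_lambda_beta vector_add_component 0 sum.distrib distrib_right 2 3 1)
qed

lemma phi_add:
  "phi beta gamma E u (c + t *\<^sub>R p) = phi beta gamma E u c + t * phi beta gamma E u p"
  by (simp add: phi_def sum.distrib sum_distrib_left algebra_simps)

lemma phi_mono:
  assumes "beta $ u > 0" "gamma $ u > 0" "\<And>v. c $ v \<le> q $ v"
  shows "phi beta gamma E u c \<le> phi beta gamma E u q"
  unfolding phi_def
  using assms by (intro add_mono mult_left_mono sum_mono) auto

lemma comb_in:
  assumes "convex P" "y \<in> P" "z \<in> P" "(a::real) \<ge> 0" "b \<ge> 0"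
  shows "\<exists>w\<in>P. a *\<^sub>R y + b *\<^sub>R z = (a + b) *\<^sub>R w"
proof (cases "a + b = 0")
  case True
  then have "a = 0" "b = 0" using assms by auto
  then show ?thesis using assms by auto
next
  case False
  then have pos: "a + b > 0" using assms by auto
  let ?w = "(a/(a+b)) *\<^sub>R y + (b/(a+b)) *\<^sub>R z"
  have "?w \<in> P"
    using assms pos by (intro convexD) (auto simp: add_divide_distrib[symmetric])
  moreover have "a *\<^sub>R y + b *\<^sub>R z = (a + b) *\<^sub>R ?w"
    using pos by (simp add: scaleR_add_right)
  ultimately show ?thesis by blast
qed

lemma main_step:
  fixes E :: "'n::finite \<Rightarrow> 'n \<Rightarrow> bool"
    and beta gamma lam q :: "real^'n"
  assumes irrefl: "\<And>u. \<not> E u u"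
    and pos: "\<And>v. beta $ v > 0" "\<And>v. gamma $ v > 0" "\<And>v. lam $ v > 0"
    and occ: "\<And>S. local_occupancy E S (\<lambda>v. beta $ v) (\<lambda>v. gamma $ v) (\<lambda>v. lam $ v)"
    and q_le: "\<And>v. phi beta gamma E v q \<le> 1"
  shows "finite S \<Longrightarrow> (\<forall>v. c $ v \<le> q $ v) \<Longrightarrow> (\<forall>v. v \<notin> S \<longrightarrow> c $ v = q $ v)
    \<Longrightarrow> (\<forall>u\<in>S. T \<le> phi beta gamma E u c) \<Longrightarrow> T \<le> 1
    \<Longrightarrow> \<exists>y\<in>ind_polytope E. q - c = (1 - T) *\<^sub>R y"
proof (induction S arbitrary: c T rule: finite_psubset_induct)
  case (psubset S)
  let ?P = "ind_polytope E"
  have cvx: "convex ?P" unfolding ind_polytope_def by (rule convex_convex_hull)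
  show ?case
  proof (cases "S = {}")
    case True
    then have "c = q" using psubset.prems by (simp add: vec_eq_iff)
    moreover have "0 \<in> ?P"
    proof -
      have "indicator_vec {} = (0::real^'n)" by (simp add: indicator_vec_def vec_eq_iff)
      moreover have "independent_set E {}" by (simp add: independent_set_def)
      ultimately show ?thesis unfolding ind_polytope_def by (metis (mono_tags, lifting) hull_inc mem_Collect_eq)
    qed
    ultimately show ?thesis by force
  next
    case False
    define lm where "lm = (\<lambda>v. lam $ v)"
    define II where "II = {I. I \<subseteq> S \<and> independent_set E I}"
    define w where "w = (\<lambda>I. hc_weight lm I)"
    define Z where "Z = hc_partition E S lm"
    define p :: "real^'n" where "p = (\<Sum>I\<in>II. (w I / Z) *\<^sub>R indicator_vec I)"
    have finII: "finite II" unfolding II_def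
      by (rule finite_subset[of _ "Pow S"]) (use psubset.hyps in auto)
    have wnn: "w I \<ge> 0" for I unfolding w_def hc_weight_def lm_def
      using pos(3) by (simp add: less_imp_le prod_nonneg)
    have wpos: "w I > 0" if "finite I" for I unfolding w_def hc_weight_def lm_def
      using pos(3) by (simp add: prod_pos)
    have Zdef: "Z = sum w II" unfolding Z_def hc_partition_def II_def w_def by simp
    have emp: "{} \<in> II" unfolding II_def by (simp add: independent_set_def)
    have Z1: "Z \<ge> 1"
    proof -
      have "w {} = 1" unfolding w_def hc_weight_def by simp
      moreover have "w {} \<le> sum w II" using finII emp wnn by (intro member_le_sum) auto
      ultimately show ?thesis using Zdef by simp
    qed
    have pP: "p \<in> ?P"
      unfolding p_def ind_polytope_def
    proof (rule convex_sum[OF finII convex_convex_hull])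
      show "(\<Sum>I\<in>II. w I / Z) = 1" using Z1 Zdef by (simp add: sum_divide_distrib[symmetric])
      show "\<And>I. I \<in> II \<Longrightarrow> 0 \<le> w I / Z" using Z1 wnn by simp
      show "\<And>I. I \<in> II \<Longrightarrow> indicator_vec I \<in> convex hull {indicator_vec I |I. independent_set E I}"
        unfolding II_def by (rule hull_inc) auto
    qed
    have pcomp: "p $ v = (\<Sum>I\<in>{I\<in>II. v \<in> I}. w I) / Z" for v
    proof -
      have "p $ v = (\<Sum>I\<in>II. (w I / Z) * (if v \<in> I then 1 else 0))"
        unfolding p_def by (simp add: indicator_vec_def)
      also have "\<dots> = (\<Sum>I\<in>II. if v \<in> I then w I / Z else 0)" by (rule sum.cong) auto
      also have "\<dots> = (\<Sum>I\<in>{I\<in>II. v \<in> I}. w I / Z)" using finII by (simp add: sum.inter_filter)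
      finally show ?thesis by (simp add: sum_divide_distrib)
    qed
    have pout: "p $ v = 0" if "v \<notin> S" for v
    proof -
      have "{I\<in>II. v \<in> I} = {}" using that unfolding II_def by auto
      then show ?thesis by (simp only: pcomp sum.empty div_0)
    qed
    have pin: "p $ v = hc_occ_prob E S lm v" if "v \<in> S" for v
    proof -
      have "{I\<in>II. v \<in> I} = {I. I \<subseteq> S \<and> independent_set E I \<and> v \<in> I}" unfolding II_def by auto
      then show ?thesis by (simp add: pcomp hc_occ_prob_def w_def Z_def)
    qed
    have ppos: "p $ v > 0" if "v \<in> S" for v
    proof -
      have "{v} \<in> {I\<in>II. v \<in> I}" using that irrefl unfolding II_def independent_set_def by auto
      then have "w {v} \<le> (\<Sum>I\<in>{I\<in>II. v \<in> I}. w I)" using finII wnn by (intro member_le_sum) auto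
      moreover have "w {v} > 0" using wpos by simp
      ultimately show ?thesis using Z1 by (simp add: pcomp)
    qed
    have phip: "phi beta gamma E u p \<ge> 1" if "u \<in> S" for u
    proof -
      have "(\<Sum>v\<in>{v. E u v}. p $ v) = (\<Sum>v\<in>{v\<in>S. E u v}. p $ v)"
        by (rule sum.mono_neutral_right) (use pout in force)+
      also have "\<dots> = (\<Sum>v\<in>{v\<in>S. E u v}. hc_occ_prob E S lm v)"
        by (rule sum.cong) (auto simp: pin)
      finally show ?thesis using occ[of S] that unfolding local_occupancy_def phi_def
        by (simp add: pin lm_def)
    qed
    define f where "f = (\<lambda>v. (q $ v - c $ v) / p $ v)"
    define t where "t = Min (f ` S)"
    obtain v0 where v0: "v0 \<in> S" "t = f v0"
    proof -
      have "Min (f ` S) \<in> f ` S" using psubset.hyps False by (intro Min_in) auto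
      then show ?thesis using that unfolding t_def by blast
    qed
    have tle: "t \<le> f v" if "v \<in> S" for v
      unfolding t_def using psubset.hyps that by (intro Min_le) auto
    have t0: "t \<ge> 0"
    proof -
      have "q $ v0 - c $ v0 \<ge> 0" using psubset.prems(1) by simp
      then show ?thesis using v0 ppos[OF v0(1)] unfolding f_def by simp
    qed
    define c' where "c' = c + t *\<^sub>R p"
    define S' where "S' = {v\<in>S. c' $ v < q $ v}"
    have c'le: "\<forall>v. c' $ v \<le> q $ v"
    proof
      fix v
      show "c' $ v \<le> q $ v"
      proof (cases "v \<in> S")
        case True
        have "t * p $ v \<le> f v * p $ v" using tle[OF True] ppos[OF True] by (simp add: mult_right_mono)
        also have "\<dots> = q $ v - c $ v" unfolding f_def using ppos[OF True] by simp
        finally show ?thesis unfolding c'_def by simp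
      next
        case False
        then show ?thesis using psubset.prems pout unfolding c'_def by simp
      qed
    qed
    have c'v0: "c' $ v0 = q $ v0" unfolding c'_def using v0 ppos[OF v0(1)] by (simp add: f_def)
    have sub: "S' \<subset> S"
    proof -
      have "v0 \<notin> S'" using c'v0 unfolding S'_def by simp
      then show ?thesis using v0(1) unfolding S'_def by blast
    qed
    have out': "\<forall>v. v \<notin> S' \<longrightarrow> c' $ v = q $ v"
    proof (intro allI impI)
      fix v assume "v \<notin> S'"
      show "c' $ v = q $ v"
      proof (cases "v \<in> S")
        case True
        then show ?thesis using \<open>v \<notin> S'\<close> c'le unfolding S'_def by (metis (mono_tags, lifting) mem_Collect_eq order_le_less)
      next
        case False
        then show ?thesis using psubset.prems pout unfolding c'_def by simp
      qed
    qed
    have phic': "T + t \<le> phi beta gamma E u c'" if "u \<in> S" for u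
    proof -
      have "T + t * 1 \<le> phi beta gamma E u c + t * phi beta gamma E u p"
        using psubset.prems that phip[OF that] t0 by (intro add_mono mult_left_mono) auto
      then show ?thesis unfolding c'_def phi_add by simp
    qed
    have T'le: "T + t \<le> 1"
      using phic'[OF v0(1)] phi_mono[OF pos(1) pos(2), of c' q E v0] c'le q_le[of v0] by auto
    have "\<exists>y\<in>?P. q - c' = (1 - (T + t)) *\<^sub>R y"
      using psubset.IH[OF sub, of c' "T + t"] c'le out' phic' T'le sub by auto
    then obtain y where y: "y \<in> ?P" "q - c' = (1 - (T + t)) *\<^sub>R y" by blast
    obtain z where z: "z \<in> ?P" "(1 - (T + t)) *\<^sub>R y + t *\<^sub>R p = ((1 - (T + t)) + t) *\<^sub>R z"
      using comb_in[OF cvx y(1) pP, of "1 - (T + t)" t] T'le t0 by auto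
    have "q - c = (q - c') + t *\<^sub>R p" unfolding c'_def by simp
    also have "\<dots> = (1 - T) *\<^sub>R z" using y(2) z(2) by simp
    finally show ?thesis using z(1) by blast
  qed
qed

theorem theorem5p1:
  fixes E :: "'n::finite \<Rightarrow> 'n \<Rightarrow> bool"
    and beta gamma lam :: "real^'n"
  assumes sym: "\<And>u v. E u v \<Longrightarrow> E v u"
    and irrefl: "\<And>u. \<not> E u u"
    and pos: "\<And>v. beta $ v > 0" "\<And>v. gamma $ v > 0" "\<And>v. lam $ v > 0"
    and occ: "\<And>S. local_occupancy E S (\<lambda>v. beta $ v) (\<lambda>v. gamma $ v) (\<lambda>v. lam $ v)"
    and q_nonneg: "\<And>v. q $ v \<ge> 0"
    and q_le: "\<And>v. ((diag_mat beta + diag_mat gamma ** adj_matrix E) *v q) $ v \<le> 1"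
  shows "q \<in> ind_polytope E"
proof -
  have ql: "\<And>v. phi beta gamma E v q \<le> 1" using q_le by (simp add: phi_matrix)
  have "\<exists>y\<in>ind_polytope E. q - 0 = (1 - 0) *\<^sub>R y"
    by (rule main_step[OF irrefl pos occ ql, of UNIV 0 0]) (auto simp: q_nonneg phi_def)
  then show ?thesis by simp
qed

end
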